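(* Let $\varphi\in L^\infty(\mathbb{R})\cap S_0(\mathbb{R})$. Then for every $t>0$, $$\|\varphi\|_\infty\le\varphi^*(t)+2\,\omega(\varphi;t),\qquad\text{where }\ \omega(\varphi;t)=\sup_{0\le h\le t}\|\Delta_h\varphi\|_\infty.$$
   Context: $\|\cdot\|_\infty$ is the essential supremum norm on $\mathbb{R}$, and $\Delta_h\varphi(x)=\varphi(x+h)-\varphi(x)$. $S_0(\mathbb{R})$ is the class of measurable, a.e. finite functions $\varphi$ on $\mathbb{R}$ with $|\{x:|\varphi(x)|>s\}|<\infty$ for every $s>0$; $\varphi^*$ is the non-increasing rearrangement of $\varphi$ (the non-negative non-increasing function on $(0,\infty)$ equimeasurable with $|\varphi|$). *)

theory Defs
  imports "HOL-Probability.Essential_Supremum"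
begin

definition ess_norm :: "(real \<Rightarrow> real) \<Rightarrow> ereal" where
  "ess_norm \<phi> = esssup lebesgue (\<lambda>x. ereal \<bar>\<phi> x\<bar>)"

text \<open>The class S_0: measurable functions whose level sets {|phi| > s} have finite measure for s > 0.
  (Real-valued functions are automatically finite everywhere.)\<close>
definition S0 :: "(real \<Rightarrow> real) set" where
  "S0 = {\<phi>. \<phi> \<in> borel_measurable lebesgue \<and>
             (\<forall>s>0. emeasure lebesgue {x. s < \<bar>\<phi> x\<bar>} < \<infinity>)}"

definition Linf :: "(real \<Rightarrow> real) set" where
  "Linf = {\<phi>. \<phi> \<in> borel_measurable lebesgue \<and> ess_norm \<phi> < \<infinity>}"

definition rearr :: "(real \<Rightarrow> real) \<Rightarrow> real \<Rightarrow> real" where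
  "rearr \<phi> t = Inf {s. 0 \<le> s \<and> emeasure lebesgue {x. s < \<bar>\<phi> x\<bar>} \<le> ennreal t}"

definition diff_op :: "real \<Rightarrow> (real \<Rightarrow> real) \<Rightarrow> real \<Rightarrow> real" where
  "diff_op h \<phi> x = \<phi> (x + h) - \<phi> x"

definition modulus :: "(real \<Rightarrow> real) \<Rightarrow> real \<Rightarrow> ereal" where
  "modulus \<phi> t = (SUP h\<in>{0..t}. ess_norm (diff_op h \<phi>))"

end

theory Submission
  imports Defs
begin

lemma AE_shift_lborel:
  assumes "AE y in lborel. Q y"
  shows "AE x in lborel. Q (x + (a::real))"
proof -
  from assms obtain N where N: "{y \<in> space lborel. \<not> Q y} \<subseteq> N" "emeasure lborel N = 0" "N \<in> sets lborel"
    by (auto elim!: AE_E)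
  have "emeasure lborel (((+) a) -` N \<inter> space lborel) = emeasure (distr lborel borel ((+) a)) N"
    using N(3) by (subst emeasure_distr) auto
  also have "\<dots> = 0" using N(2) by (simp add: lborel_distr_plus)
  finally have z: "emeasure lborel (((+) a) -` N) = 0" by simp
  have m: "((+) a) -` N \<in> sets lborel"
    using N(3) measurable_sets[of "(+) a" borel borel N] by simp
  show ?thesis
    by (rule AE_I'[of "((+) a) -` N"]) (use z m N(1) in \<open>auto simp: add.commute\<close>)
qed

theorem mainTheorem7:
  fixes \<phi> :: "real \<Rightarrow> real" and t :: real
  assumes "\<phi> \<in> Linf" and "\<phi> \<in> S0" and "t > 0"
  shows "ess_norm \<phi> \<le> ereal (rearr \<phi> t) + 2 * modulus \<phi> t"
proof (rule ccontr)
  assume neg: "\<not> ?thesis"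
  define s where "s = rearr \<phi> t"
  have phim[measurable]: "\<phi> \<in> borel_measurable lebesgue" using assms(1) by (simp add: Linf_def)
  have setm: "{y. r < \<bar>\<phi> y\<bar>} \<in> sets lebesgue" for r
  proof -
    have "{y \<in> space lebesgue. r < \<bar>\<phi> y\<bar>} \<in> sets lebesgue" by measurable
    then show ?thesis by simp
  qed
  have fin: "ess_norm \<phi> < \<infinity>" using assms(1) by (simp add: Linf_def)
  have nz: "emeasure (lebesgue :: real measure) (space lebesgue) \<noteq> 0" by simp
  have m0: "ess_norm (diff_op 0 \<phi>) = 0"
    unfolding ess_norm_def diff_op_def using esssup_const[OF nz, of "ereal 0"] by (simp add: zero_ereal_def)
  have modge: "ess_norm (diff_op h \<phi>) \<le> modulus \<phi> t" if "h \<in> {0..t}" for h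
    unfolding modulus_def by (rule SUP_upper) fact
  have mod0: "0 \<le> modulus \<phi> t" using modge[of 0] m0 assms(3) by simp
  have "modulus \<phi> t \<noteq> \<infinity>"
  proof
    assume "modulus \<phi> t = \<infinity>"
    then have "ereal (rearr \<phi> t) + 2 * modulus \<phi> t = \<infinity>" by simp
    with neg show False by simp
  qed
  with mod0 obtain w where w: "modulus \<phi> t = ereal w" by (cases "modulus \<phi> t") auto
  have Dh: "AE x in lborel. \<bar>\<phi> (x+h) - \<phi> x\<bar> \<le> w" if "h \<in> {0..t}" for h
  proof -
    have "AE x in lebesgue. ereal \<bar>diff_op h \<phi> x\<bar> \<le> ess_norm (diff_op h \<phi>)"
      unfolding ess_norm_def by (rule esssup_AE)
    then have "AE x in lebesgue. \<bar>\<phi> (x+h) - \<phi> x\<bar> \<le> w"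
      proof eventually_elim
      case (elim x)
      have "ereal \<bar>\<phi> (x+h) - \<phi> x\<bar> \<le> modulus \<phi> t"
        using elim modge[OF that] unfolding diff_op_def by (rule order_trans)
      then have "ereal \<bar>\<phi> (x+h) - \<phi> x\<bar> \<le> ereal w" using w by simp
      then show ?case by simp
    qed
    then show ?thesis by (simp add: AE_completion_iff)
  qed
  obtain \<psi> where \<psi>: "\<psi> \<in> borel_measurable lborel" "AE x in lborel. \<phi> x = \<psi> x"
    using completion_ex_borel_measurable_real[OF phim] by blast
  have psim[measurable]: "\<psi> \<in> borel_measurable borel" using \<psi>(1) by simp
  have D\<psi>: "AE x in lborel. \<bar>\<psi> (x+h) - \<psi> x\<bar> \<le> w" if "h \<in> {0..t}" for h
    using Dh[OF that] \<psi>(2) AE_shift_lborel[OF \<psi>(2), of h]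
    by eventually_elim auto
  have D2: "AE x in lborel. \<bar>\<psi> (x+h) - \<psi> x\<bar> \<le> 2*w" if "h \<in> {0..2*t}" for h
  proof -
    have h2: "h/2 \<in> {0..t}" using that by auto
    have e: "\<And>x. x + h/2 + h/2 = x + h" by simp
    show ?thesis
      using D\<psi>[OF h2] AE_shift_lborel[OF D\<psi>[OF h2], of "h/2"]
    proof eventually_elim
      case (elim x)
      then have "\<bar>\<psi> (x + h) - \<psi> (x + h/2)\<bar> \<le> w" by (simp only: e)
      with elim(1) show ?case by (simp add: abs_le_iff)
    qed
  qed
  have meas: "{z \<in> space (lborel \<Otimes>\<^sub>M lborel). (\<lambda>x h. h \<in> {0..2*t} \<longrightarrow> \<bar>\<psi> (x+h) - \<psi> x\<bar> \<le> 2*w) (fst z) (snd z)}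
      \<in> sets ((lborel::real measure) \<Otimes>\<^sub>M (lborel::real measure))"
    by measurable
  have "AE h in lborel. AE x in lborel. h \<in> {0..2*t} \<longrightarrow> \<bar>\<psi> (x+h) - \<psi> x\<bar> \<le> 2*w"
  proof (rule AE_I2)
    fix h :: real
    show "AE x in lborel. h \<in> {0..2*t} \<longrightarrow> \<bar>\<psi> (x+h) - \<psi> x\<bar> \<le> 2*w"
      by (cases "h \<in> {0..2*t}") (use D2 in auto)
  qed
  then have fub: "AE x in lborel. AE h in lborel. h \<in> {0..2*t} \<longrightarrow> \<bar>\<psi> (x+h) - \<psi> x\<bar> \<le> 2*w"
    using lborel_pair.AE_commute[OF meas] by simp
  have "ereal (s + 2*w) < ess_norm \<phi>" using neg w by (simp add: s_def not_le)
  then obtain z where z: "ereal (s + 2*w) < z" "z < ess_norm \<phi>" using ereal_dense2 by blast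
  then obtain c where c: "z = ereal c" using fin by (cases z) auto
  have cl: "s + 2*w < c" and cu: "ereal c < ess_norm \<phi>" using z c by auto
  have pos: "\<not> (AE x in lborel. \<bar>\<psi> x\<bar> \<le> c)"
  proof
    assume "AE x in lborel. \<bar>\<psi> x\<bar> \<le> c"
    with \<psi>(2) have "AE x in lborel. ereal \<bar>\<phi> x\<bar> \<le> ereal c" by eventually_elim auto
    then have "AE x in lebesgue. ereal \<bar>\<phi> x\<bar> \<le> ereal c" by (simp add: AE_completion_iff)
    then have "ess_norm \<phi> \<le> ereal c" unfolding ess_norm_def by (intro esssup_I) measurable
    with cu show False by simp
  qed
  obtain x where x: "c < \<bar>\<psi> x\<bar>" "AE h in lborel. h \<in> {0..2*t} \<longrightarrow> \<bar>\<psi> (x+h) - \<psi> x\<bar> \<le> 2*w"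
  proof -
    have "\<exists>x. c < \<bar>\<psi> x\<bar> \<and> (AE h in lborel. h \<in> {0..2*t} \<longrightarrow> \<bar>\<psi> (x+h) - \<psi> x\<bar> \<le> 2*w)"
    proof (rule ccontr)
      assume "\<not> ?thesis"
      then have "AE x in lborel. \<bar>\<psi> x\<bar> \<le> c" using fub by (auto elim!: eventually_mono simp: not_le[symmetric])
      with pos show False by simp
    qed
    then show ?thesis using that by blast
  qed
  from x(2) have "AE h in lborel. h \<in> {0..2*t} \<longrightarrow> c - 2*w < \<bar>\<psi> (x+h)\<bar>"
    by eventually_elim (use x(1) in auto)
  from AE_shift_lborel[OF this, of "-x"]
  have "AE y in lborel. y \<in> {x..x+2*t} \<longrightarrow> c - 2*w < \<bar>\<psi> y\<bar>" by (auto elim!: eventually_mono)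
  with \<psi>(2) have "AE y in lborel. y \<in> {x..x+2*t} \<longrightarrow> y \<in> {y. c - 2*w < \<bar>\<phi> y\<bar>}"
    by eventually_elim auto
  then have "AE y in lebesgue. y \<in> {x..x+2*t} \<longrightarrow> y \<in> {y. c - 2*w < \<bar>\<phi> y\<bar>}"
    by (simp add: AE_completion_iff)
  then have "emeasure lebesgue {x..x+2*t} \<le> emeasure lebesgue {y. c - 2*w < \<bar>\<phi> y\<bar>}"
    by (rule emeasure_mono_AE) (rule setm)
  moreover have "emeasure lebesgue {x..x+2*t} = ennreal (2*t)" using assms(3) by simp
  ultimately have big: "ennreal (2*t) \<le> emeasure lebesgue {y. c - 2*w < \<bar>\<phi> y\<bar>}" by simp
  define S where "S = {s. 0 \<le> s \<and> emeasure lebesgue {x. s < \<bar>\<phi> x\<bar>} \<le> ennreal t}"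
  obtain M where M: "ess_norm \<phi> = ereal M" using fin cu by (cases "ess_norm \<phi>") auto
  have "AE y in lebesgue. ereal \<bar>\<phi> y\<bar> \<le> ess_norm \<phi>"
    unfolding ess_norm_def by (rule esssup_AE)
  then have "AE y in lebesgue. \<not> (max M 0 < \<bar>\<phi> y\<bar>)"
    by eventually_elim (use M in auto)
  then have "emeasure lebesgue {y \<in> space lebesgue. max M 0 < \<bar>\<phi> y\<bar>} = 0"
    by (rule emeasure_eq_0_AE)
  then have "max M 0 \<in> S" unfolding S_def by simp
  then have Sne: "S \<noteq> {}" by blast
  have "Inf S < c - 2*w" using cl by (simp add: s_def rearr_def S_def)
  then obtain s' where s': "s' \<in> S" "s' < c - 2*w" using cInf_lessD[OF Sne] by blast
  have "emeasure lebesgue {y. c - 2*w < \<bar>\<phi> y\<bar>} \<le> emeasure lebesgue {y. s' < \<bar>\<phi> y\<bar>}"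
    by (rule emeasure_mono) (use s'(2) setm in auto)
  also have "\<dots> \<le> ennreal t" using s'(1) by (simp add: S_def)
  finally have "ennreal (2*t) \<le> ennreal t" using big by (rule order_trans[rotated])
  then show False using assms(3) by (simp add: ennreal_le_iff)
qed

end
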